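(* $\gamma^{L-ID}(\mathcal{H})=\frac38$: every local identifying code in the hexagonal grid has density at least $3/8$, and there is a local identifying code in the hexagonal grid of density $3/8$.
   Context: The hexagonal grid $\mathcal{H}$ has vertex set $\mathbb{Z}^2$, with $\mathbf{u}=(i,j)$ and $\mathbf{v}$ adjacent iff $\mathbf{u}-\mathbf{v}\in\{(\pm1,0),(0,(-1)^{i+j+1})\}$. For a nonempty $C\subseteq\mathbb{Z}^2$ and vertex $\mathbf{u}$, $I(\mathbf{u})=N[\mathbf{u}]\cap C$ where $N[\mathbf{u}]$ is the closed neighbourhood. $C$ is a local identifying code if $I(\mathbf{u})\ne\emptyset$ for all $\mathbf{u}$ and $I(\mathbf{u})\ne I(\mathbf{v})$ for all adjacent $\mathbf{u},\mathbf{v}$. The density of $C$ is $D(C)=\limsup_{n\to\infty}|C\cap Q_n|/|Q_n|$ with $Q_n=\{(i,j)\in\mathbb{Z}^2:|i|\le n,|j|\le n\}$. $\gamma^{L-ID}(G)$ denotes the smallest density of a local identifying code in $G$. *)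

theory Defs
  imports "HOL-Analysis.Analysis"
begin

type_synonym vertex = "int \<times> int"

definition hex_adj :: "vertex \<Rightarrow> vertex \<Rightarrow> bool" where
  "hex_adj u v \<longleftrightarrow>
     (let (i, j) = u; (k, l) = v in
       (i - k, j - l) \<in> {(1, 0), (-1, 0), (0, if even (i + j) then -1 else 1)})"

definition hex_closed_nbhd :: "vertex \<Rightarrow> vertex set" where
  "hex_closed_nbhd u = insert u {v. hex_adj u v}"

definition I_set :: "vertex set \<Rightarrow> vertex \<Rightarrow> vertex set" where
  "I_set C u = hex_closed_nbhd u \<inter> C"

definition local_identifying_code :: "vertex set \<Rightarrow> bool" where
  "local_identifying_code C \<longleftrightarrow>
     C \<noteq> {} \<and>
     (\<forall>u. I_set C u \<noteq> {}) \<and>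
     (\<forall>u v. hex_adj u v \<longrightarrow> I_set C u \<noteq> I_set C v)"

definition Q :: "nat \<Rightarrow> vertex set" where
  "Q n = {(i, j). \<bar>i\<bar> \<le> int n \<and> \<bar>j\<bar> \<le> int n}"

definition density :: "vertex set \<Rightarrow> ereal" where
  "density C = limsup (\<lambda>n. ereal (real (card (C \<inter> Q n)) / real (card (Q n))))"

end

theory Submission
  imports Defs "HOL-Real_Asymp.Real_Asymp"
begin


lemma adj_iff: "hex_adj (i,j) v \<longleftrightarrow> v = (i+1,j) \<or> v = (i-1,j) \<or> v = (i, if even(i+j) then j+1 else j-1)"
  by (cases v) (auto simp: hex_adj_def)

lemma nb_eq: "{v. hex_adj (i,j) v} = {(i+1,j),(i-1,j),(i, if even(i+j) then j+1 else j-1)}"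
  using adj_iff by auto

lemma adj_sym: "hex_adj u v \<Longrightarrow> hex_adj v u"
  by (cases u; cases v) (auto simp: adj_iff split: if_splits)

lemma adj_par: "hex_adj (i,j) (k,l) \<Longrightarrow> even (i+j) \<noteq> even (k+l)"
  by (auto simp: adj_iff split: if_splits)

lemma adj_irrefl: "\<not> hex_adj u u"
  by (cases u) (auto simp: adj_iff)

lemma nb3: "\<exists>a b d. {v. hex_adj u v} = {a,b,d} \<and> distinct [u,a,b,d]"
proof (cases u)
  case (Pair i j)
  show ?thesis unfolding Pair nb_eq
    by (rule exI[of _ "(i+1,j)"], rule exI[of _ "(i-1,j)"], rule exI[of _ "(i, if even(i+j) then j+1 else j-1)"]) auto
qed

lemma no_tri: "hex_adj u v \<Longrightarrow> hex_adj u w \<Longrightarrow> \<not> hex_adj v w"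
  by (cases u; cases v; cases w) (metis adj_par)

definition kk :: "vertex set \<Rightarrow> vertex \<Rightarrow> nat" where
  "kk C u = card ({v. hex_adj u v} \<inter> C)"

definition alpha :: "vertex set \<Rightarrow> vertex \<Rightarrow> vertex \<Rightarrow> real" where
  "alpha C u c = (if c \<notin> C then 0 else if u = c then (if kk C c = 1 then 2/3 else 1)
     else if hex_adj u c then (if u \<in> C then (if kk C u = 1 then 1/3 else 0) else (if kk C u = 1 then 1 else 1/2)) else 0)"

lemma card3: "distinct [a,b,d] \<Longrightarrow> card ({a,b,d} \<inter> C) =
   (if a \<in> C then 1 else 0) + (if b \<in> C then 1 else 0) + (if d \<in> C then (1::nat) else 0)"
  by (cases "a \<in> C"; cases "b \<in> C"; cases "d \<in> C") (auto simp: Int_insert_left card_insert_if)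

lemma alpha_nonneg: "alpha C u c \<ge> 0"
  by (simp add: alpha_def)

lemma L1:
  assumes "local_identifying_code C"
  shows "1 \<le> (\<Sum>c\<in>hex_closed_nbhd u. alpha C u c)"
proof -
  obtain a b d where nb: "{v. hex_adj u v} = {a,b,d}" and di: "distinct [u,a,b,d]"
    using nb3 by blast
  have adj: "hex_adj u a" "hex_adj u b" "hex_adj u d" using nb by auto
  have k: "kk C u = (if a \<in> C then 1 else 0) + (if b \<in> C then 1 else 0) + (if d \<in> C then 1 else 0)"
    unfolding kk_def nb using di by (simp add: card3)
  have cn: "hex_closed_nbhd u = {u,a,b,d}" unfolding hex_closed_nbhd_def nb ..
  have dom: "{u,a,b,d} \<inter> C \<noteq> {}" using assms cn unfolding local_identifying_code_def I_set_def by metis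
  have s: "(\<Sum>c\<in>hex_closed_nbhd u. alpha C u c) = alpha C u u + alpha C u a + alpha C u b + alpha C u d"
    unfolding cn using di by (simp add: algebra_simps)
  show ?thesis unfolding s using dom di adj k
    by (cases "u \<in> C"; cases "a \<in> C"; cases "b \<in> C"; cases "d \<in> C") (auto simp: alpha_def)
qed

lemma fin_nb: "finite {v. hex_adj u v}"
proof -
  obtain a b d where "{v. hex_adj u v} = {a,b,d}" using nb3 by blast
  then show ?thesis by simp
qed


lemma card1_eq: "card A = 1 \<Longrightarrow> c \<in> A \<Longrightarrow> A = {c}"
  by (auto simp: card_Suc_eq)

lemma card_le1_eq: "finite A \<Longrightarrow> card A \<le> 1 \<Longrightarrow> c \<in> A \<Longrightarrow> A = {c}"
  by (metis card1_eq card_0_eq emptyE le_neq_implies_less less_one)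

lemma I_set_eq: "I_set C u = (if u \<in> C then insert u ({v. hex_adj u v} \<inter> C) else {v. hex_adj u v} \<inter> C)"
  unfolding I_set_def hex_closed_nbhd_def by auto

lemma alpha_bound:
  assumes code: "local_identifying_code C" and cC: "c \<in> C" and xc: "hex_adj x c"
  shows "alpha C x c \<le> (if x \<in> C then (if kk C c \<ge> 2 then 1/3 else 0) else (if kk C c \<ge> 1 then 1 else 1/2))"
proof -
  have xne: "x \<noteq> c" using xc adj_irrefl by metis
  have cx: "hex_adj c x" using xc adj_sym by blast
  have diff: "I_set C x \<noteq> I_set C c" using code xc unfolding local_identifying_code_def by blast
  have cin: "c \<in> {v. hex_adj x v} \<inter> C" using xc cC by auto
  have xin: "x \<in> C \<Longrightarrow> x \<in> {v. hex_adj c v} \<inter> C" using cx by auto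
  show ?thesis
  proof (cases "kk C x = 1")
    case False
    then show ?thesis using xne xc cC by (auto simp: alpha_def)
  next
    case True
    have nx: "{v. hex_adj x v} \<inter> C = {c}"
      using card1_eq[OF True[unfolded kk_def] cin] by blast
    show ?thesis
    proof (cases "x \<in> C")
      case False
      have "kk C c \<ge> 1"
      proof (rule ccontr)
        assume "\<not> 1 \<le> kk C c"
        then have c0: "card ({v. hex_adj c v} \<inter> C) = 0" unfolding kk_def by simp
        have "finite ({v. hex_adj c v} \<inter> C)" using fin_nb[of c] by simp
        then have "{v. hex_adj c v} \<inter> C = {}" using c0 by simp
        then show False using diff False cC nx by (simp add: I_set_eq)
      qed
      then show ?thesis using xne xc cC False True by (auto simp: alpha_def)
    next
      case xC: True
      have "kk C c \<ge> 2"
      proof (rule ccontr)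
        assume "\<not> 2 \<le> kk C c"
        then have "{v. hex_adj c v} \<inter> C = {x}"
          using card_le1_eq[OF _ _ xin[OF xC]] fin_nb[of c] unfolding kk_def by simp
        then show False using diff xC cC nx by (auto simp: I_set_eq)
      qed
      then show ?thesis using xne xc cC xC True by (auto simp: alpha_def)
    qed
  qed
qed

lemma L2:
  assumes code: "local_identifying_code C" and cC: "c \<in> C"
  shows "(\<Sum>u\<in>hex_closed_nbhd c. alpha C u c) \<le> 8/3"
proof -
  obtain a b d where nb: "{v. hex_adj c v} = {a,b,d}" and di: "distinct [c,a,b,d]"
    using nb3 by blast
  have adj0: "hex_adj c a" "hex_adj c b" "hex_adj c d" using nb by blast+
  have adj: "hex_adj a c" "hex_adj b c" "hex_adj d c" using adj0 adj_sym by blast+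
  have k: "kk C c = (if a \<in> C then 1 else 0) + (if b \<in> C then 1 else 0) + (if d \<in> C then 1 else 0)"
    unfolding kk_def nb using di by (simp add: card3)
  have cn: "hex_closed_nbhd c = {c,a,b,d}" unfolding hex_closed_nbhd_def nb ..
  have s: "(\<Sum>u\<in>hex_closed_nbhd c. alpha C u c) = alpha C c c + alpha C a c + alpha C b c + alpha C d c"
    unfolding cn using di by (simp add: algebra_simps)
  have ba: "alpha C a c \<le> (if a \<in> C then (if kk C c \<ge> 2 then 1/3 else 0) else (if kk C c \<ge> 1 then 1 else 1/2))"
    by (rule alpha_bound[OF code cC adj(1)])
  have bb: "alpha C b c \<le> (if b \<in> C then (if kk C c \<ge> 2 then 1/3 else 0) else (if kk C c \<ge> 1 then 1 else 1/2))"
    by (rule alpha_bound[OF code cC adj(2)])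
  have bd: "alpha C d c \<le> (if d \<in> C then (if kk C c \<ge> 2 then 1/3 else 0) else (if kk C c \<ge> 1 then 1 else 1/2))"
    by (rule alpha_bound[OF code cC adj(3)])
  have cc: "alpha C c c = (if kk C c = 1 then 2/3 else 1)" using cC by (simp add: alpha_def)
  show ?thesis unfolding s
  proof (cases "a \<in> C"; cases "b \<in> C"; cases "d \<in> C")
  qed (use k cc ba bb bd in \<open>simp_all\<close>)
qed

lemma Q_eq: "Q n = {- int n..int n} \<times> {- int n..int n}"
  unfolding Q_def by auto

lemma Q_fin: "finite (Q n)"
  unfolding Q_eq by simp

lemma Q_card: "card (Q n) = (2*n+1)^2"
proof -
  have "card {- int n..int n} = 2*n+1" by simp
  then show ?thesis unfolding Q_eq by (simp add: card_cartesian_product power2_eq_square)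
qed

lemma cn_fin: "finite (hex_closed_nbhd u)"
  unfolding hex_closed_nbhd_def using fin_nb by simp

lemma cn_sub: "u \<in> Q n \<Longrightarrow> hex_closed_nbhd u \<subseteq> Q (Suc n)"
  by (cases u) (auto simp: Q_def hex_closed_nbhd_def adj_iff)

lemma cn_sym: "c \<in> hex_closed_nbhd u \<Longrightarrow> u \<in> hex_closed_nbhd c"
  unfolding hex_closed_nbhd_def using adj_sym by blast

lemma count_bound:
  assumes code: "local_identifying_code C"
  shows "real (card (Q n)) \<le> 8/3 * real (card (C \<inter> Q (Suc n)))"
proof -
  let ?A = "Q n" and ?B = "Q (Suc n)"
  have "real (card ?A) = (\<Sum>u\<in>?A. 1)" by simp
  also have "\<dots> \<le> (\<Sum>u\<in>?A. \<Sum>c\<in>hex_closed_nbhd u. alpha C u c)"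
    by (rule sum_mono) (rule L1[OF code])
  also have "\<dots> = (\<Sum>u\<in>?A. \<Sum>c\<in>{c. c \<in> ?B \<and> c \<in> hex_closed_nbhd u}. alpha C u c)"
  proof (rule sum.cong[OF refl])
    fix u assume "u \<in> ?A"
    then have "{c. c \<in> ?B \<and> c \<in> hex_closed_nbhd u} = hex_closed_nbhd u" using cn_sub by blast
    then show "(\<Sum>c\<in>hex_closed_nbhd u. alpha C u c) = (\<Sum>c\<in>{c. c \<in> ?B \<and> c \<in> hex_closed_nbhd u}. alpha C u c)"
      by simp
  qed
  also have "\<dots> = (\<Sum>c\<in>?B. \<Sum>u\<in>{u. u \<in> ?A \<and> c \<in> hex_closed_nbhd u}. alpha C u c)"
    by (rule sum.swap_restrict[OF Q_fin Q_fin])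
  also have "\<dots> \<le> (\<Sum>c\<in>?B. if c \<in> C then 8/3 else 0)"
  proof (rule sum_mono)
    fix c assume "c \<in> ?B"
    show "(\<Sum>u\<in>{u. u \<in> ?A \<and> c \<in> hex_closed_nbhd u}. alpha C u c) \<le> (if c \<in> C then 8/3 else 0)"
    proof (cases "c \<in> C")
      case False
      then show ?thesis by (simp add: alpha_def)
    next
      case True
      have sub: "{u. u \<in> ?A \<and> c \<in> hex_closed_nbhd u} \<subseteq> hex_closed_nbhd c" using cn_sym by blast
      have "(\<Sum>u\<in>{u. u \<in> ?A \<and> c \<in> hex_closed_nbhd u}. alpha C u c) \<le> (\<Sum>u\<in>hex_closed_nbhd c. alpha C u c)"
        by (rule sum_mono2[OF cn_fin sub]) (simp add: alpha_nonneg)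
      also have "\<dots> \<le> 8/3" by (rule L2[OF code True])
      finally show ?thesis using True by simp
    qed
  qed
  also have "\<dots> = 8/3 * real (card (C \<inter> ?B))"
    by (simp add: sum.If_cases[OF Q_fin] Int_commute Collect_mem_eq)
  finally show ?thesis .
qed



definition C0 :: "vertex set" where
  "C0 = {(i,j). (even j \<and> i mod 8 \<in> {0,1,2}) \<or> (odd j \<and> i mod 8 \<in> {4,5,6})}"

lemma C0_mem: "((a,b) \<in> C0) = ((even b \<and> (a mod 8 = 0 \<or> a mod 8 = 1 \<or> a mod 8 = 2)) \<or> (odd b \<and> (a mod 8 = 4 \<or> a mod 8 = 5 \<or> a mod 8 = 6)))"
  unfolding C0_def by auto

lemma reduce:
  assumes "\<And>q p r s. r \<in> {0,1,2,3,4,5,6,7} \<Longrightarrow> s \<in> {0,1} \<Longrightarrow> P (8*q+r) (2*p+s)"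
  shows "P (i::int) (j::int)"
proof -
  have r: "i mod 8 \<in> {0,1,2,3,4,5,6,7}" by auto
  have s: "j mod 2 \<in> {0,1}" by auto
  have "P (8*(i div 8) + i mod 8) (2*(j div 2) + j mod 2)" using assms[OF r s] .
  then show ?thesis by simp
qed

lemma C0_dom0: "(i,j)\<in>C0 \<or> (i+1,j)\<in>C0 \<or> (i-1,j)\<in>C0 \<or> (i, if even(i+j) then j+1 else j-1) \<in> C0"
  apply (rule reduce[where P = "\<lambda>i j. (i,j)\<in>C0 \<or> (i+1,j)\<in>C0 \<or> (i-1,j)\<in>C0 \<or> (i, if even(i+j) then j+1 else j-1) \<in> C0"])
  apply (simp only: insert_iff empty_iff)
  apply (elim disjE; simp add: C0_mem)
  done


lemma E1: "(i-1,j)\<in>C0 \<or> (i,(if even(i+j) then j+1 else j-1))\<in>C0 \<or> (i+2,j)\<in>C0 \<or> (i+1,(if even(i+j) then j-1 else j+1))\<in>C0"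
  apply (rule reduce[where P = "\<lambda>i j. (i-1,j)\<in>C0 \<or> (i,(if even(i+j) then j+1 else j-1))\<in>C0 \<or> (i+2,j)\<in>C0 \<or> (i+1,(if even(i+j) then j-1 else j+1))\<in>C0"])
  apply (simp only: insert_iff empty_iff)
  apply (elim disjE; simp add: C0_mem)
  done

lemma E2: "(i+1,j)\<in>C0 \<or> (i,(if even(i+j) then j+1 else j-1))\<in>C0 \<or> (i-2,j)\<in>C0 \<or> (i-1,(if even(i+j) then j-1 else j+1))\<in>C0"
  apply (rule reduce[where P = "\<lambda>i j. (i+1,j)\<in>C0 \<or> (i,(if even(i+j) then j+1 else j-1))\<in>C0 \<or> (i-2,j)\<in>C0 \<or> (i-1,(if even(i+j) then j-1 else j+1))\<in>C0"])
  apply (simp only: insert_iff empty_iff)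
  apply (elim disjE; simp add: C0_mem)
  done

lemma E3: "(i+1,j)\<in>C0 \<or> (i-1,j)\<in>C0 \<or> (i+1,(if even(i+j) then j+1 else j-1))\<in>C0 \<or> (i-1,(if even(i+j) then j+1 else j-1))\<in>C0"
  apply (rule reduce[where P = "\<lambda>i j. (i+1,j)\<in>C0 \<or> (i-1,j)\<in>C0 \<or> (i+1,(if even(i+j) then j+1 else j-1))\<in>C0 \<or> (i-1,(if even(i+j) then j+1 else j-1))\<in>C0"])
  apply (simp only: insert_iff empty_iff)
  apply (elim disjE; simp add: C0_mem)
  done

lemma code_suff:
  assumes ne: "C \<noteq> {}" and dom: "\<And>u. I_set C u \<noteq> {}"
    and ed: "\<And>u v. hex_adj u v \<Longrightarrow> \<exists>w\<in>C. (hex_adj u w \<and> w \<noteq> v) \<or> (hex_adj v w \<and> w \<noteq> u)"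
  shows "local_identifying_code C"
  unfolding local_identifying_code_def
proof (intro conjI allI impI)
  show "C \<noteq> {}" by fact
  fix u show "I_set C u \<noteq> {}" by fact
next
  fix u v assume uv: "hex_adj u v"
  have vu: "hex_adj v u" using uv adj_sym by blast
  obtain w where wC: "w \<in> C" and h: "(hex_adj u w \<and> w \<noteq> v) \<or> (hex_adj v w \<and> w \<noteq> u)"
    using ed[OF uv] by blast
  show "I_set C u \<noteq> I_set C v"
  proof
    assume eq: "I_set C u = I_set C v"
    from h show False
    proof
      assume a: "hex_adj u w \<and> w \<noteq> v"
      then have "w \<in> I_set C u" using wC by (simp add: I_set_def hex_closed_nbhd_def)
      then have "w \<in> I_set C v" using eq by simp
      then have "hex_adj v w" using a by (simp add: I_set_def hex_closed_nbhd_def)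
      then show False using no_tri[OF uv] a by blast
    next
      assume a: "hex_adj v w \<and> w \<noteq> u"
      then have "w \<in> I_set C v" using wC by (simp add: I_set_def hex_closed_nbhd_def)
      then have "w \<in> I_set C u" using eq by simp
      then have "hex_adj u w" using a by (simp add: I_set_def hex_closed_nbhd_def)
      then show False using no_tri[OF vu] a by blast
    qed
  qed
qed

lemma I_mem: "w \<in> C \<Longrightarrow> w = u \<or> hex_adj u w \<Longrightarrow> I_set C u \<noteq> {}"
  unfolding I_set_def hex_closed_nbhd_def by blast

lemma C0_code: "local_identifying_code C0"
proof (rule code_suff)
  have "(0,0) \<in> C0" by (simp add: C0_mem)
  then show "C0 \<noteq> {}" by blast
next
  fix u :: vertex
  obtain i j where u: "u = (i,j)" by (cases u)
  have "I_set C0 (i,j) = {(i,j),(i+1,j),(i-1,j),(i, if even(i+j) then j+1 else j-1)} \<inter> C0"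
    unfolding I_set_def hex_closed_nbhd_def nb_eq ..
  then show "I_set C0 u \<noteq> {}" unfolding u using C0_dom0[of i j] by auto
next
  fix u v :: vertex assume uv: "hex_adj u v"
  obtain i j where u: "u = (i,j)" by (cases u)
  from uv[unfolded u adj_iff]
  show "\<exists>w\<in>C0. (hex_adj u w \<and> w \<noteq> v) \<or> (hex_adj v w \<and> w \<noteq> u)"
  proof (elim disjE)
    assume v: "v = (i+1,j)"
    show ?thesis using E1[of i j]
    proof (elim disjE)
      assume "(i-1,j) \<in> C0"
      then show ?thesis unfolding u v by (rule bexI[rotated]) (simp add: adj_iff split: if_splits)
    next
      assume "(i,(if even(i+j) then j+1 else j-1)) \<in> C0"
      then show ?thesis unfolding u v by (rule bexI[rotated]) (simp add: adj_iff split: if_splits)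
    next
      assume "(i+2,j) \<in> C0"
      then show ?thesis unfolding u v by (rule bexI[rotated]) (simp add: adj_iff split: if_splits)
    next
      assume "(i+1,(if even(i+j) then j-1 else j+1)) \<in> C0"
      then show ?thesis unfolding u v by (rule bexI[rotated]) (simp add: adj_iff split: if_splits)
    qed
  next
    assume v: "v = (i-1,j)"
    show ?thesis using E2[of i j]
    proof (elim disjE)
      assume "(i+1,j) \<in> C0"
      then show ?thesis unfolding u v by (rule bexI[rotated]) (simp add: adj_iff split: if_splits)
    next
      assume "(i,(if even(i+j) then j+1 else j-1)) \<in> C0"
      then show ?thesis unfolding u v by (rule bexI[rotated]) (simp add: adj_iff split: if_splits)
    next
      assume "(i-2,j) \<in> C0"
      then show ?thesis unfolding u v by (rule bexI[rotated]) (simp add: adj_iff split: if_splits)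
    next
      assume "(i-1,(if even(i+j) then j-1 else j+1)) \<in> C0"
      then show ?thesis unfolding u v by (rule bexI[rotated]) (simp add: adj_iff split: if_splits)
    qed
  next
    assume v: "v = (i, (if even(i+j) then j+1 else j-1))"
    show ?thesis using E3[of i j]
    proof (elim disjE)
      assume "(i+1,j) \<in> C0"
      then show ?thesis unfolding u v by (rule bexI[rotated]) (simp add: adj_iff split: if_splits)
    next
      assume "(i-1,j) \<in> C0"
      then show ?thesis unfolding u v by (rule bexI[rotated]) (simp add: adj_iff split: if_splits)
    next
      assume "(i+1,(if even(i+j) then j+1 else j-1)) \<in> C0"
      then show ?thesis unfolding u v by (rule bexI[rotated]) (simp add: adj_iff split: if_splits)
    next
      assume "(i-1,(if even(i+j) then j+1 else j-1)) \<in> C0"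
      then show ?thesis unfolding u v by (rule bexI[rotated]) (simp add: adj_iff split: if_splits)
    qed
  qed
qed



lemma lower_bound:
  assumes code: "local_identifying_code C"
  shows "ereal (3/8) \<le> density C"
proof -
  define b where "b n = 3/8 * (2*real n - 1)^2 / (2*real n + 1)^2" for n
  have lim: "b \<longlonglongrightarrow> 3/8" unfolding b_def by real_asymp
  have ev: "eventually (\<lambda>n. ereal (b n) \<le> ereal (real (card (C \<inter> Q n)) / real (card (Q n)))) sequentially"
    unfolding eventually_sequentially
  proof (intro exI allI impI)
    fix n :: nat assume "1 \<le> n"
    then obtain m where n: "n = Suc m" by (cases n) auto
    have cb: "real (card (Q m)) \<le> 8/3 * real (card (C \<inter> Q n))" using count_bound[OF code, of m] n by simp
    have qm: "real (card (Q m)) = (2*real m + 1)^2" by (simp add: Q_card)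
    have qn: "real (card (Q n)) = (2*real m + 3)^2" by (simp add: Q_card n algebra_simps)
    have bn: "b n = 3/8 * (2*real m + 1)^2 / (2*real m + 3)^2" by (simp add: b_def n algebra_simps)
    have pos: "(2*real m + 3)^2 > 0" by simp
    have "b n \<le> real (card (C \<inter> Q n)) / real (card (Q n))"
      unfolding bn qn using cb qm pos by (simp add: field_simps)
    then show "ereal (b n) \<le> ereal (real (card (C \<inter> Q n)) / real (card (Q n)))" by simp
  qed
  have "limsup (\<lambda>n. ereal (b n)) = ereal (3/8)"
    by (rule lim_imp_Limsup) (simp_all add: lim)
  moreover have "limsup (\<lambda>n. ereal (b n)) \<le> density C"
    unfolding density_def by (rule Limsup_mono[OF ev])
  ultimately show ?thesis by simp
qed


lemma C0_card:
  "4 * card (C0 \<inter> Q n) \<le> 3 * (2*n+1) * (n+8)"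
proof -
  define D where "D = {(- int n) div 8 .. int n div 8}"
  define g where "g = (\<lambda>(q::int, j::int, t::int). (8*q + t + (if even j then 0 else 4), j))"
  have sub: "C0 \<inter> Q n \<subseteq> g ` (D \<times> {- int n..int n} \<times> {0,1,2})"
  proof
    fix x assume x: "x \<in> C0 \<inter> Q n"
    obtain i j where xij: "x = (i,j)" by (cases x)
    have ij: "- int n \<le> i" "i \<le> int n" "- int n \<le> j" "j \<le> int n" using x xij by (auto simp: Q_def)
    have m: "(even j \<and> (i mod 8 = 0 \<or> i mod 8 = 1 \<or> i mod 8 = 2)) \<or> (odd j \<and> (i mod 8 = 4 \<or> i mod 8 = 5 \<or> i mod 8 = 6))"
      using x xij C0_mem by auto
    define t where "t = i mod 8 - (if even j then 0 else 4)"
    have t: "t \<in> {0,1,2}" using m unfolding t_def by auto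
    have q: "i div 8 \<in> D" unfolding D_def using ij by (auto intro: zdiv_mono1)
    have "x = g (i div 8, j, t)" unfolding g_def t_def xij by simp
    then show "x \<in> g ` (D \<times> {- int n..int n} \<times> {0,1,2})" using q t ij by auto
  qed
  have "card (C0 \<inter> Q n) \<le> card (g ` (D \<times> {- int n..int n} \<times> {0,1,2}))"
    by (rule card_mono[OF _ sub]) (simp add: D_def)
  also have "\<dots> \<le> card (D \<times> {- int n..int n} \<times> {0::int,1,2})" by (rule card_image_le) (simp add: D_def)
  also have "\<dots> = card D * (2*n+1) * 3"
  proof -
    have cI: "card {- int n..int n} = 2*n+1" by simp
    show ?thesis by (simp only: card_cartesian_product cI) simp
  qed
  finally have c: "card (C0 \<inter> Q n) \<le> card D * (2*n+1) * 3" .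
  have a1: "8 * (int n div 8) \<le> int n" by simp
  have a2: "8 * ((- int n) div 8) > - int n - 8" by linarith
  have gen: "\<And>A B N::int. 8*A \<le> N \<Longrightarrow> -N-8 < 8*B \<Longrightarrow> 4*(A-B+1) \<le> N+8" by presburger
  have "4 * (int n div 8 - (- int n) div 8 + 1) \<le> int n + 8" using gen[OF a1 a2] .
  then have h4: "4 * int (card D) \<le> int n + 8"
    unfolding D_def card_atLeastAtMost_int by simp
  then have "4 * card D \<le> n + 8" by linarith
  then have "4 * card D * ((2*n+1) * 3) \<le> (n + 8) * ((2*n+1) * 3)" by (rule mult_right_mono) simp
  moreover have "4 * card (C0 \<inter> Q n) \<le> 4 * card D * ((2*n+1) * 3)" using c by (simp add: algebra_simps)
  ultimately show ?thesis by (simp add: algebra_simps)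
qed


lemma C0_upper: "density C0 \<le> ereal (3/8)"
proof -
  define c where "c n = 3 * (real n + 8) / (4 * (2 * real n + 1))" for n
  have lim: "c \<longlonglongrightarrow> 3/8" unfolding c_def by real_asymp
  have ev: "eventually (\<lambda>n. ereal (real (card (C0 \<inter> Q n)) / real (card (Q n))) \<le> ereal (c n)) sequentially"
  proof (rule always_eventually, rule allI)
    fix n :: nat
    have h: "4 * real (card (C0 \<inter> Q n)) \<le> 3 * (2 * real n + 1) * (real n + 8)"
      using C0_card[of n] by (metis (mono_tags, lifting) of_nat_le_iff of_nat_mult of_nat_numeral of_nat_add of_nat_1 mult_2)
    have q: "real (card (Q n)) = (2 * real n + 1)^2" by (simp add: Q_card)
    have pos: "2 * real n + 1 > 0" by simp
    have "real (card (C0 \<inter> Q n)) / real (card (Q n)) \<le> (3 * (2 * real n + 1) * (real n + 8) / 4) / (2 * real n + 1)^2"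
      unfolding q by (rule divide_right_mono) (use h in simp_all)
    also have "\<dots> = c n"
    proof -
      have gen: "\<And>a m::real. a \<noteq> 0 \<Longrightarrow> (3*a*m/4)/a^2 = 3*m/(4*a)"
        by (simp add: field_simps power2_eq_square)
      show ?thesis unfolding c_def using gen[of "2 * real n + 1" "real n + 8"] pos by simp
    qed
    finally have "real (card (C0 \<inter> Q n)) / real (card (Q n)) \<le> c n" .
    then show "ereal (real (card (C0 \<inter> Q n)) / real (card (Q n))) \<le> ereal (c n)" by simp
  qed
  have "limsup (\<lambda>n. ereal (c n)) = ereal (3/8)"
    by (rule lim_imp_Limsup) (simp_all add: lim)
  moreover have "density C0 \<le> limsup (\<lambda>n. ereal (c n))"
    unfolding density_def by (rule Limsup_mono[OF ev])
  ultimately show ?thesis by simp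
qed

theorem mainTheorem14:
  shows "(\<forall>C. local_identifying_code C \<longrightarrow> density C \<ge> ereal (3/8)) \<and>
         (\<exists>C. local_identifying_code C \<and> density C = ereal (3/8))"
proof
  show "\<forall>C. local_identifying_code C \<longrightarrow> density C \<ge> ereal (3/8)"
    using lower_bound by blast
  show "\<exists>C. local_identifying_code C \<and> density C = ereal (3/8)"
    using C0_code C0_upper lower_bound[OF C0_code] by (intro exI[of _ C0]) auto
qed


end
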